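(* Let Assumption 1 hold. For every real $c_1,\dots,c_n$, every initial state $x_0=x(0)\in\mathbb{R}^n$ of the plant and every locally integrable input $u(\cdot)$, the state $\chi(t)=\mathrm{col}(\zeta(t),\mu(t))\in\mathbb{R}^{2n}$ of the filters satisfies, for all $t\ge 0$, \[\dot\chi(t)=A_{\mathrm f}\chi(t)+B_{\mathrm f}u(t)+G_{\mathrm f}\,\mathrm{e}^{A_{\mathrm r}^\top t}x_0 ,\] and the pair $(A_{\mathrm f},B_{\mathrm f})$ is reachable.
   Context: Fix $n\ge 1$ and real numbers $a_1,\dots,a_n,b_1,\dots,b_n$. The plant is the continuous-time SISO system $y^{(n)}+a_1y^{(n-1)}+\dots+a_ny=b_1u^{(n-1)}+\dots+b_nu$, represented in observability canonical form $\dot x=Ax+Bu$, $y=Cx$, $x(t)\in\mathbb{R}^n$, where $C=[0_{1,n-1}\;1]$, $A$ is the $n\times n$ matrix whose first $n-1$ columns are $\begin{bmatrix}0_{1,n-1}\\ I_{n-1}\end{bmatrix}$ and whose last column is $(-a_n,\dots,-a_1)^\top$, and $B=(b_n,\dots,b_1)^\top$. Assumption 1: the polynomials $s^n+a_1s^{n-1}+\dots+a_n$ and $b_1s^{n-1}+\dots+b_n$ are coprime (no common complex root). For real parameters $c_1,\dots,c_n$, $A_{\mathrm r}\in\mathbb{R}^{n\times n}$ is the matrix whose first $n-1$ rows are $[0_{n-1,1}\;I_{n-1}]$ and whose last row is $(-c_n,\dots,-c_1)$, and $B_{\mathrm r}=(0,\dots,0,1)^\top\in\mathbb{R}^n$.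 The filters are $\dot\zeta=A_{\mathrm r}\zeta+B_{\mathrm r}u$, $\zeta(0)=0$, and $\dot\mu=A_{\mathrm r}\mu+B_{\mathrm r}y$, $\mu(0)=0$, with $\chi=\mathrm{col}(\zeta,\mu)$. Define $A_{\mathrm f}=\begin{bmatrix}A_{\mathrm r}&0_{n,n}\\ L_b& A_a\end{bmatrix}\in\mathbb{R}^{2n\times 2n}$, where $L_b\in\mathbb{R}^{n\times n}$ has all rows zero except the last, which equals $(b_n,\dots,b_1)$, and $A_a\in\mathbb{R}^{n\times n}$ has first $n-1$ rows $[0_{n-1,1}\;I_{n-1}]$ and last row $(-a_n,\dots,-a_1)$; $B_{\mathrm f}=\mathrm{col}(0_{n-1,1},1,0_{n,1})\in\mathbb{R}^{2n}$; and $G_{\mathrm f}\in\mathbb{R}^{2n\times n}$ is the matrix whose only nonzero entry is a $1$ in position $(2n,n)$. *)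

theory Defs
  imports "HOL-Analysis.Analysis" "Jordan_Normal_Form.DL_Rank"
begin

text \<open>All matrices/vectors are Jordan_Normal_Form matrices/vectors, indexed from 0.
  The coefficient sequences a, b, c are indexed from 1 as in the paper (a 1, ..., a n).\<close>

definition A_obs :: "nat \<Rightarrow> (nat \<Rightarrow> real) \<Rightarrow> real mat" where
  "A_obs n a = mat n n (\<lambda>(i,j). if j = n - 1 then - a (n - i) else if i = j + 1 then 1 else 0)"

definition B_obs :: "nat \<Rightarrow> (nat \<Rightarrow> real) \<Rightarrow> real vec" where
  "B_obs n b = vec n (\<lambda>i. b (n - i))"

definition C_obs :: "nat \<Rightarrow> real vec" where
  "C_obs n = vec n (\<lambda>i. if i = n - 1 then 1 else 0)"

text \<open>Companion matrix with first n-1 rows [0 I] and last row (-c n, ..., -c 1):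
  this is A_r (with c) and A_a (with a).\<close>
definition comp_mat :: "nat \<Rightarrow> (nat \<Rightarrow> real) \<Rightarrow> real mat" where
  "comp_mat n c = mat n n (\<lambda>(i,j). if i = n - 1 then - c (n - j) else if j = i + 1 then 1 else 0)"

definition B_r :: "nat \<Rightarrow> real vec" where
  "B_r n = vec n (\<lambda>i. if i = n - 1 then 1 else 0)"

definition L_b :: "nat \<Rightarrow> (nat \<Rightarrow> real) \<Rightarrow> real mat" where
  "L_b n b = mat n n (\<lambda>(i,j). if i = n - 1 then b (n - j) else 0)"

definition A_f :: "nat \<Rightarrow> (nat \<Rightarrow> real) \<Rightarrow> (nat \<Rightarrow> real) \<Rightarrow> (nat \<Rightarrow> real) \<Rightarrow> real mat" where
  "A_f n a b c = four_block_mat (comp_mat n c) (0\<^sub>m n n) (L_b n b) (comp_mat n a)"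

definition B_f :: "nat \<Rightarrow> real vec" where
  "B_f n = vec (2 * n) (\<lambda>i. if i = n - 1 then 1 else 0)"

definition G_f :: "nat \<Rightarrow> real mat" where
  "G_f n = mat (2 * n) n (\<lambda>(i,j). if i = 2 * n - 1 \<and> j = n - 1 then 1 else 0)"

definition mat_exp :: "real mat \<Rightarrow> real \<Rightarrow> real mat" where
  "mat_exp M t = mat (dim_row M) (dim_col M)
     (\<lambda>(i,j). \<Sum>k. t ^ k / fact k * (M ^\<^sub>m k) $$ (i,j))"

text \<open>Solution (Caratheodory sense) on [0,\<infinity>) of z' = F(t), z(0) = z0, in R^m:
  each component is the indefinite (Lebesgue/Henstock) integral of the right-hand side.\<close>
definition is_solution :: "nat \<Rightarrow> (real \<Rightarrow> real vec) \<Rightarrow> (real \<Rightarrow> real vec) \<Rightarrow> real vec \<Rightarrow> bool" where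
  "is_solution m z F z0 \<longleftrightarrow> (\<forall>t. z t \<in> carrier_vec m) \<and> z 0 = z0 \<and>
     (\<forall>t\<ge>0. \<forall>i<m. ((\<lambda>s. F s $ i) has_integral (z t $ i - z0 $ i)) {0..t})"

definition reachable :: "nat \<Rightarrow> real mat \<Rightarrow> real vec \<Rightarrow> bool" where
  "reachable m A B \<longleftrightarrow>
     vec_space.rank m (mat m m (\<lambda>(i,j). ((A ^\<^sub>m j) *\<^sub>v B) $ i :: real)) = m"

definition assumption1 :: "nat \<Rightarrow> (nat \<Rightarrow> real) \<Rightarrow> (nat \<Rightarrow> real) \<Rightarrow> bool" where
  "assumption1 n a b \<longleftrightarrow> \<not> (\<exists>s::complex.
     s ^ n + (\<Sum>k=1..n. of_real (a k) * s ^ (n - k)) = 0 \<and>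
     (\<Sum>k=1..n. of_real (b k) * s ^ (n - k)) = 0)"

end

theory Submission
  imports Defs "HOL-Computational_Algebra.Fundamental_Theorem_Algebra" "HOL-Computational_Algebra.Polynomial_Factorial" "HOL-Computational_Algebra.Field_as_Ring"
begin



lemma mat_mult_idx: "A \<in> carrier_mat n m \<Longrightarrow> B \<in> carrier_mat m p \<Longrightarrow> i < n \<Longrightarrow> j < p \<Longrightarrow>
  (A * B) $$ (i, j) = (\<Sum>l<m. A $$ (i, l) * B $$ (l, j))"
  by (auto simp: scalar_prod_def atLeast0LessThan)

lemma mat_vec_idx: "M \<in> carrier_mat n m \<Longrightarrow> v \<in> carrier_vec m \<Longrightarrow> i < n \<Longrightarrow>
  (M *\<^sub>v v) $ i = (\<Sum>j<m. M $$ (i, j) * v $ j)"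
  by (auto simp: scalar_prod_def atLeast0LessThan)

lemma pow_comm: assumes M: "M \<in> carrier_mat n n" shows "M ^\<^sub>m k * M = M * M ^\<^sub>m k"
proof (induction k)
  case 0
  then show ?case using M by simp
next
  case (Suc k)
  have "M ^\<^sub>m Suc k * M = (M ^\<^sub>m k * M) * M" by simp
  also have "\<dots> = (M * M ^\<^sub>m k) * M" using Suc by simp
  also have "\<dots> = M * (M ^\<^sub>m k * M)" using M by (simp add: assoc_mult_mat[of _ n n _ n _ n])
  finally show ?case by simp
qed

lemma pow_bound: assumes M: "M \<in> carrier_mat n n" and K: "\<And>i j. i < n \<Longrightarrow> j < n \<Longrightarrow> \<bar>M $$ (i, j)\<bar> \<le> K"
  and i: "i < n" and j: "j < n"
  shows "\<bar>(M ^\<^sub>m k) $$ (i, j)\<bar> \<le> (real n * K) ^ k"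
  using i j
proof (induction k arbitrary: i j)
  case 0
  then show ?case using M by auto
next
  case (Suc k)
  have K0: "0 \<le> K" using K[of 0 0] Suc by auto
  have "(M ^\<^sub>m Suc k) $$ (i, j) = (\<Sum>l<n. (M ^\<^sub>m k) $$ (i, l) * M $$ (l, j))"
    unfolding pow_mat.simps by (rule mat_mult_idx[of _ n n _ n]) (use M Suc in auto)
  also have "\<bar>\<dots>\<bar> \<le> (\<Sum>l<n. \<bar>(M ^\<^sub>m k) $$ (i, l) * M $$ (l, j)\<bar>)" by (rule sum_abs)
  also have "\<dots> \<le> (\<Sum>l<n. (real n * K) ^ k * K)"
    by (rule sum_mono) (use Suc K K0 in \<open>auto simp: abs_mult intro!: mult_mono\<close>)
  also have "\<dots> = (real n * K) ^ Suc k" by simp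
  finally show ?case .
qed

definition mbound :: "nat \<Rightarrow> real mat \<Rightarrow> real" where
  "mbound n M = (\<Sum>i<n. \<Sum>j<n. \<bar>M $$ (i, j)\<bar>)"

lemma mbound: "i < n \<Longrightarrow> j < n \<Longrightarrow> \<bar>M $$ (i, j)\<bar> \<le> mbound n M"
proof -
  assume i: "i < n" and j: "j < n"
  have "\<bar>M $$ (i, j)\<bar> \<le> (\<Sum>j<n. \<bar>M $$ (i, j)\<bar>)"
    by (rule member_le_sum) (use j in auto)
  also have "\<dots> \<le> mbound n M" unfolding mbound_def
    by (rule member_le_sum[where f = "\<lambda>i. \<Sum>j<n. \<bar>M $$ (i, j)\<bar>"]) (use i in \<open>auto intro: sum_nonneg\<close>)
  finally show ?thesis .
qed

lemma mexp_summable: fixes M :: "real mat" assumes M: "M \<in> carrier_mat n n" and i: "i < n" and j: "j < n"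
  shows "summable (\<lambda>k. (M ^\<^sub>m k) $$ (i, j) / fact k * y ^ k)"
proof -
  define g where "g k = inverse (fact k) * (real n * mbound n M * \<bar>y\<bar>) ^ k" for k
  have "norm ((M ^\<^sub>m k) $$ (i, j) / fact k * y ^ k) \<le> g k" for k
  proof -
    have "norm ((M ^\<^sub>m k) $$ (i, j) / fact k * y ^ k) = \<bar>(M ^\<^sub>m k) $$ (i, j)\<bar> * \<bar>y\<bar> ^ k / fact k"
      by (simp add: abs_mult power_abs)
    also have "\<dots> \<le> (real n * mbound n M) ^ k * \<bar>y\<bar> ^ k / fact k"
      by (intro divide_right_mono mult_right_mono pow_bound[OF M _ i j]) (auto intro: mbound)
    also have "\<dots> = g k" unfolding g_def
      by (simp add: power_mult_distrib field_simps)
    finally show ?thesis .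
  qed
  moreover have "summable g" unfolding g_def by (rule summable_exp)
  ultimately show ?thesis using summable_comparison_test[of "\<lambda>k. (M ^\<^sub>m k) $$ (i, j) / fact k * y ^ k" g] by blast
qed

lemma mat_exp_idx: assumes M: "M \<in> carrier_mat n n" and i: "i < n" and j: "j < n"
  shows "mat_exp M t $$ (i, j) = (\<Sum>k. (M ^\<^sub>m k) $$ (i, j) / fact k * t ^ k)"
  unfolding mat_exp_def using M i j by (simp add: mult.commute)

lemma mexp_deriv: assumes M: "M \<in> carrier_mat n n" and i: "i < n" and j: "j < n"
  shows "((\<lambda>t. mat_exp M t $$ (i, j)) has_real_derivative
     (\<Sum>l<n. M $$ (i, l) * mat_exp M t $$ (l, j))) (at t)"
proof -
  define cf where "cf k = (M ^\<^sub>m k) $$ (i, j) / fact k" for k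
  have f: "(\<lambda>t. mat_exp M t $$ (i, j)) = (\<lambda>t. \<Sum>k. cf k * t ^ k)"
    unfolding cf_def using mat_exp_idx[OF M i j] by auto
  have d: "((\<lambda>t. \<Sum>k. cf k * t ^ k) has_real_derivative (\<Sum>k. diffs cf k * t ^ k)) (at t)"
    by (rule termdiffs_strong_converges_everywhere) (unfold cf_def, rule mexp_summable[OF M i j])
  have "diffs cf k * t ^ k = (\<Sum>l<n. M $$ (i, l) * ((M ^\<^sub>m k) $$ (l, j) / fact k * t ^ k))" for k
  proof -
    have "(M ^\<^sub>m Suc k) $$ (i, j) = (M * M ^\<^sub>m k) $$ (i, j)" using pow_comm[OF M, of k] by simp
    also have "\<dots> = (\<Sum>l<n. M $$ (i, l) * (M ^\<^sub>m k) $$ (l, j))"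
      by (rule mat_mult_idx[of _ n n _ n]) (use M i j in auto)
    finally have e: "(M ^\<^sub>m Suc k) $$ (i, j) = (\<Sum>l<n. M $$ (i, l) * (M ^\<^sub>m k) $$ (l, j))" .
    have nz: "real (Suc k) \<noteq> 0" by simp
    have "diffs cf k = real (Suc k) * ((M ^\<^sub>m Suc k) $$ (i, j) / (real (Suc k) * fact k))"
      unfolding diffs_def cf_def fact_Suc by simp
    also have "\<dots> = (M ^\<^sub>m Suc k) $$ (i, j) / fact k" using nz by simp
    finally have "diffs cf k = (M ^\<^sub>m Suc k) $$ (i, j) / fact k" .
    then show ?thesis unfolding e by (simp add: sum_distrib_right sum_divide_distrib mult.assoc)
  qed
  then have "(\<Sum>k. diffs cf k * t ^ k) = (\<Sum>k. \<Sum>l<n. M $$ (i, l) * ((M ^\<^sub>m k) $$ (l, j) / fact k * t ^ k))"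
    by simp
  also have "\<dots> = (\<Sum>l<n. \<Sum>k. M $$ (i, l) * ((M ^\<^sub>m k) $$ (l, j) / fact k * t ^ k))"
    by (rule suminf_sum, rule summable_mult, rule mexp_summable[OF M _ j]) simp
  also have "\<dots> = (\<Sum>l<n. M $$ (i, l) * mat_exp M t $$ (l, j))"
  proof (rule sum.cong)
    fix l assume "l \<in> {..<n}"
    then have l: "l < n" by simp
    show "(\<Sum>k. M $$ (i, l) * ((M ^\<^sub>m k) $$ (l, j) / fact k * t ^ k)) = M $$ (i, l) * mat_exp M t $$ (l, j)"
      unfolding mat_exp_idx[OF M l j] by (rule suminf_mult[OF mexp_summable[OF M l j]])
  qed simp
  finally show ?thesis using d f by simp
qed

lemma mexp_0: assumes M: "M \<in> carrier_mat n n" and i: "i < n" and j: "j < n"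
  shows "mat_exp M 0 $$ (i, j) = (if i = j then 1 else 0)"
proof -
  have "(\<Sum>k. (M ^\<^sub>m k) $$ (i, j) / fact k * (0::real) ^ k) = (\<Sum>k\<in>{0}. (M ^\<^sub>m k) $$ (i, j) / fact k * (0::real) ^ k)"
    by (rule suminf_finite) auto
  then show ?thesis using mat_exp_idx[OF M i j, of 0] M i j by simp
qed


lemma quad_bound: fixes M :: "real mat"
  shows "(\<Sum>i<n. w i * (\<Sum>l<n. M $$ (i, l) * w l)) \<le> real n * mbound n M * (\<Sum>i<n. (w i)\<^sup>2)"
proof -
  let ?K = "mbound n M"
  have K0: "0 \<le> ?K" unfolding mbound_def by (auto intro: sum_nonneg)
  have "(\<Sum>i<n. w i * (\<Sum>l<n. M $$ (i, l) * w l)) = (\<Sum>i<n. \<Sum>l<n. M $$ (i, l) * (w i * w l))"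
    by (simp add: sum_distrib_left ac_simps)
  also have "\<dots> \<le> (\<Sum>i<n. \<Sum>l<n. ?K * (((w i)\<^sup>2 + (w l)\<^sup>2) / 2))"
  proof (intro sum_mono)
    fix i l assume "i \<in> {..<n}" "l \<in> {..<n}"
    then have b: "\<bar>M $$ (i, l)\<bar> \<le> ?K" by (auto intro: mbound)
    have q: "\<bar>w i * w l\<bar> \<le> ((w i)\<^sup>2 + (w l)\<^sup>2) / 2"
      using sum_squares_bound[of "\<bar>w i\<bar>" "\<bar>w l\<bar>"] abs_mult[of "w i" "w l"]
      by (simp add: power2_eq_square)
    have "M $$ (i, l) * (w i * w l) \<le> \<bar>M $$ (i, l)\<bar> * \<bar>w i * w l\<bar>"
      by (metis abs_ge_self abs_mult)
    also have "\<dots> \<le> ?K * (((w i)\<^sup>2 + (w l)\<^sup>2) / 2)"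
      by (rule mult_mono[OF b q]) (auto simp: K0)
    finally show "M $$ (i, l) * (w i * w l) \<le> ?K * (((w i)\<^sup>2 + (w l)\<^sup>2) / 2)" .
  qed
  also have "\<dots> = ?K / 2 * ((\<Sum>i<n. \<Sum>l<n. (w i)\<^sup>2) + (\<Sum>i<n. \<Sum>l<n. (w l)\<^sup>2))"
    by (simp add: sum_distrib_left sum.distrib algebra_simps add_divide_distrib)
  also have "\<dots> = real n * ?K * (\<Sum>i<n. (w i)\<^sup>2)"
    by (simp add: sum_distrib_left algebra_simps)
  finally show ?thesis .
qed

lemma lin_unique:
  fixes M :: "real mat" and w :: "real \<Rightarrow> nat \<Rightarrow> real"
  assumes T: "0 \<le> T"
    and d: "\<And>i t. i < n \<Longrightarrow> t \<in> {0..T} \<Longrightarrow>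
        ((\<lambda>s. w s i) has_real_derivative (\<Sum>l<n. M $$ (i, l) * w t l)) (at t within {0..T})"
    and w0: "\<And>i. i < n \<Longrightarrow> w 0 i = 0"
    and i: "i < n"
  shows "w T i = 0"
proof -
  define L where "L = real n * mbound n M"
  define V where "V s = (\<Sum>i<n. (w s i)\<^sup>2)" for s
  define W where "W s = exp (- (2 * L) * s) * V s" for s
  define DV where "DV s = (\<Sum>i<n. 2 * w s i * (\<Sum>l<n. M $$ (i, l) * w s l))" for s
  have dV: "(V has_real_derivative DV t) (at t within {0..T})" if t: "t \<in> {0..T}" for t
    unfolding V_def DV_def
    by (rule DERIV_sum, rule DERIV_cong, rule DERIV_power[OF d[OF _ t]]) auto
  have DVb: "DV s \<le> 2 * L * V s" for s
    using quad_bound[where n=n and w="w s" and M=M] unfolding DV_def V_def L_def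
    by (simp add: sum_distrib_left[symmetric] mult.assoc)
  have dW: "(W has_real_derivative exp (- (2 * L) * t) * (DV t - 2 * L * V t)) (at t within {0..T})"
    if t: "t \<in> {0..T}" for t
    unfolding W_def
    by (rule DERIV_cong, rule DERIV_mult[OF _ dV[OF t]], rule DERIV_cong,
        rule DERIV_chain2[where f = exp, OF DERIV_exp], rule DERIV_cong, rule DERIV_cmult_Id)
      (auto simp: algebra_simps)
  obtain x where x: "x \<in> {0..T}" and mv: "W T - W 0 = exp (- (2 * L) * x) * (DV x - 2 * L * V x) * (T - 0)"
  proof -
    have "\<exists>x\<in>{0..T}. W T - W 0 = exp (- (2 * L) * x) * (DV x - 2 * L * V x) * (T - 0)"
      by (rule mvt_very_simple[OF T, of W "\<lambda>x. (*) (exp (- (2 * L) * x) * (DV x - 2 * L * V x))"])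
        (use dW in \<open>auto simp: has_field_derivative_def\<close>)
    then show ?thesis using that by blast
  qed
  have "exp (- (2 * L) * x) * (DV x - 2 * L * V x) * (T - 0) \<le> 0"
    using DVb[of x] T by (simp add: mult_nonneg_nonpos2 mult_nonneg_nonpos)
  moreover have "W 0 = 0" unfolding W_def V_def using w0 by simp
  ultimately have "W T \<le> 0" using mv by simp
  then have "V T \<le> 0" unfolding W_def by (simp add: mult_le_0_iff)
  moreover have "(w T i)\<^sup>2 \<le> V T" unfolding V_def by (rule member_le_sum) (use i in auto)
  ultimately have "(w T i)\<^sup>2 \<le> 0" by linarith
  then show ?thesis by simp
qed


lemma comp_mat_carrier[simp]: "comp_mat n c \<in> carrier_mat n n"
  unfolding comp_mat_def by simp

lemma comp_mat_dims[simp]: "dim_row (comp_mat n c) = n" "dim_col (comp_mat n c) = n"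
  unfolding comp_mat_def by auto

lemma At_carrier[simp]: "transpose_mat (comp_mat n c) \<in> carrier_mat n n"
  by simp

lemma A_obs_eq: "A_obs n a = transpose_mat (comp_mat n a)"
  by (rule eq_matI) (auto simp: A_obs_def comp_mat_def)

lemma At_mult: assumes v: "v \<in> carrier_vec n" and i: "i < n"
  shows "(transpose_mat (comp_mat n c) *\<^sub>v v) $ i = (if i = 0 then 0 else v $ (i - 1)) - c (n - i) * v $ (n - 1)"
proof -
  have "(transpose_mat (comp_mat n c) *\<^sub>v v) $ i = (\<Sum>j<n. transpose_mat (comp_mat n c) $$ (i, j) * v $ j)"
    by (rule mat_vec_idx[OF At_carrier v i])
  also have "\<dots> = (\<Sum>j<n. (if j = n - 1 then - c (n - i) * v $ j else 0) + (if i = Suc j then v $ j else 0))"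
    by (rule sum.cong) (use i in \<open>auto simp: comp_mat_def\<close>)
  also have "\<dots> = - c (n - i) * v $ (n - 1) + (if i = 0 then 0 else v $ (i - 1))"
  proof -
    have "(\<Sum>j<n. if i = Suc j then v $ j else 0) = (\<Sum>j<n. if j = i - 1 \<and> i \<noteq> 0 then v $ j else 0)"
      by (rule sum.cong) auto
    also have "\<dots> = (if i = 0 then 0 else v $ (i - 1))" using i by (auto simp: sum.delta)
    finally show ?thesis using i by (simp add: sum.distrib)
  qed
  finally show ?thesis by simp
qed

definition ch :: "nat \<Rightarrow> (nat \<Rightarrow> real) \<Rightarrow> nat \<Rightarrow> real" where
  "ch n c k = (if k < n then c (n - k) else if k = n then 1 else 0)"

definition bt :: "nat \<Rightarrow> (nat \<Rightarrow> real) \<Rightarrow> nat \<Rightarrow> real" where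
  "bt n \<beta> k = (if k < n then \<beta> k else 0)"

definition ff :: "nat \<Rightarrow> (nat \<Rightarrow> real) \<Rightarrow> (nat \<Rightarrow> real) \<Rightarrow> nat \<Rightarrow> nat \<Rightarrow> real" where
  "ff n c \<beta> k q = ch n c k * bt n \<beta> q - bt n \<beta> k * ch n c q"

definition PP :: "nat \<Rightarrow> (nat \<Rightarrow> real) \<Rightarrow> (nat \<Rightarrow> real) \<Rightarrow> nat \<Rightarrow> nat \<Rightarrow> real" where
  "PP n c \<beta> i j = (\<Sum>q\<le>min i j. ff n c \<beta> (i + j + 1 - q) q)"

lemma PP_last: assumes i: "i < n" shows "PP n c \<beta> i (n - 1) = \<beta> i"
proof -
  have m: "min i (n - 1) = i" using i by simp
  have "PP n c \<beta> i (n - 1) = (\<Sum>q\<le>i. if q = i then \<beta> i else 0)"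
    unfolding PP_def m
    by (rule sum.cong) (use i in \<open>auto simp: ff_def ch_def bt_def\<close>)
  then show ?thesis by simp
qed

lemma PP_last2: assumes j: "j < n" shows "PP n c \<beta> (n - 1) j = \<beta> j"
proof -
  have m: "min (n - 1) j = j" using j by simp
  have "PP n c \<beta> (n - 1) j = (\<Sum>q\<le>j. if q = j then \<beta> j else 0)"
    unfolding PP_def m
    by (rule sum.cong) (use j in \<open>auto simp: ff_def ch_def bt_def\<close>)
  then show ?thesis by simp
qed

lemma ff_anti: "ff n c \<beta> k q = - ff n c \<beta> q k"
  unfolding ff_def by simp

lemma PP_rec: "PP n c \<beta> i (Suc j) = PP n c \<beta> (Suc i) j - ff n c \<beta> (Suc j) (Suc i)"
proof (cases "i \<le> j")
  case True
  then have m1: "min i (Suc j) = i" and m2: "min (Suc i) j = Suc i \<or> (i = j)" by auto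
  show ?thesis
  proof (cases "i = j")
    case True
    then show ?thesis unfolding PP_def by (simp add: ff_def)
  next
    case False
    then have m2: "min (Suc i) j = Suc i" using \<open>i \<le> j\<close> by simp
    have "PP n c \<beta> (Suc i) j = PP n c \<beta> i (Suc j) + ff n c \<beta> (Suc i + j + 1 - Suc i) (Suc i)"
      unfolding PP_def m1 m2 by (simp add: add_ac)
    then show ?thesis by simp
  qed
next
  case False
  then have m1: "min i (Suc j) = Suc j" and m2: "min (Suc i) j = j" by auto
  have "PP n c \<beta> i (Suc j) = PP n c \<beta> (Suc i) j + ff n c \<beta> (i + Suc j + 1 - Suc j) (Suc j)"
    unfolding PP_def m1 m2 by (simp add: add_ac)
  then show ?thesis using ff_anti[of n c \<beta> "Suc i" "Suc j"] by simp
qed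

lemma PP_j0: "PP n c \<beta> i 0 = ff n c \<beta> (Suc i) 0"
  unfolding PP_def by simp

lemma PP_i0: "PP n c \<beta> 0 j = ff n c \<beta> (Suc j) 0"
  unfolding PP_def by simp


lemma comp_mat_mult: assumes v: "v \<in> carrier_vec n" and i: "i < n"
  shows "(comp_mat n c *\<^sub>v v) $ i = (if i = n - 1 then - (\<Sum>j<n. c (n - j) * v $ j) else v $ (Suc i))"
proof -
  have "(comp_mat n c *\<^sub>v v) $ i = (\<Sum>j<n. comp_mat n c $$ (i, j) * v $ j)"
    by (rule mat_vec_idx[OF comp_mat_carrier v i])
  also have "\<dots> = (\<Sum>j<n. (if i = n - 1 then - (c (n - j) * v $ j) else if j = Suc i then v $ j else 0))"
    by (rule sum.cong) (auto simp: comp_mat_def i)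
  also have "\<dots> = (if i = n - 1 then - (\<Sum>j<n. c (n - j) * v $ j) else v $ (Suc i))"
    using i by (auto simp: sum_negf)
  finally show ?thesis .
qed

lemma coef_eq: assumes i: "i < n" and l: "l < n"
  shows "(if l = 0 then 0 else PP n c \<beta> i (l - 1)) - \<beta> i * ch n c l =
         (if i = 0 then 0 else PP n c \<beta> (i - 1) l) - ch n c i * \<beta> l"
proof (cases i)
  case 0
  then show ?thesis
  proof (cases l)
    case (Suc l')
    then show ?thesis using 0 PP_i0[of n c \<beta> l'] l i by (simp add: ff_def bt_def)
  qed simp
next
  case (Suc i')
  then show ?thesis
  proof (cases l)
    case 0
    then show ?thesis using Suc PP_j0[of n c \<beta> i'] l i by (simp add: ff_def bt_def)
  next
    case (Suc l')
    then show ?thesis using \<open>i = Suc i'\<close> PP_rec[of n c \<beta> i' l'] l i by (simp add: ff_def bt_def)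
  qed
qed

lemma filt_id: assumes n: "n \<ge> 1" and phi: "\<phi> \<in> carrier_vec n" and i: "i < n"
  shows "(\<Sum>j<n. PP n c \<beta> i j * ((comp_mat n c *\<^sub>v \<phi>) $ j + w * B_r n $ j)) =
    (transpose_mat (comp_mat n c) *\<^sub>v vec n (\<lambda>l. \<Sum>j<n. PP n c \<beta> l j * \<phi> $ j)) $ i + \<beta> i * w"
proof -
  obtain m where nm: "n = Suc m" using n by (cases n) auto
  define cL where "cL l = (if l = 0 then 0 else PP n c \<beta> i (l - 1)) - \<beta> i * ch n c l" for l
  define cR where "cR l = (if i = 0 then 0 else PP n c \<beta> (i - 1) l) - ch n c i * \<beta> l" for l
  have Br: "B_r n $ j = (if j = m then 1 else 0)" if "j < n" for j
    using that nm by (simp add: B_r_def)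
  have "(\<Sum>j<n. PP n c \<beta> i j * ((comp_mat n c *\<^sub>v \<phi>) $ j + w * B_r n $ j)) =
        (\<Sum>j<n. PP n c \<beta> i j * (comp_mat n c *\<^sub>v \<phi>) $ j) + (\<Sum>j<n. if j = m then PP n c \<beta> i j * w else 0)"
  proof -
    have "(\<Sum>j<n. PP n c \<beta> i j * ((comp_mat n c *\<^sub>v \<phi>) $ j + w * B_r n $ j)) =
        (\<Sum>j<n. PP n c \<beta> i j * (comp_mat n c *\<^sub>v \<phi>) $ j + (if j = m then PP n c \<beta> i j * w else 0))"
      by (rule sum.cong) (auto simp: Br distrib_left)
    then show ?thesis by (simp only: sum.distrib)
  qed
  also have "(\<Sum>j<n. if j = m then PP n c \<beta> i j * w else 0) = \<beta> i * w"
    using PP_last[OF i, of c \<beta>] nm by simp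
  also have "(\<Sum>j<n. PP n c \<beta> i j * (comp_mat n c *\<^sub>v \<phi>) $ j) =
      (\<Sum>j<m. PP n c \<beta> i j * \<phi> $ Suc j) - \<beta> i * (\<Sum>l<n. c (n - l) * \<phi> $ l)"
  proof -
    have "(\<Sum>j<n. PP n c \<beta> i j * (comp_mat n c *\<^sub>v \<phi>) $ j) =
       (\<Sum>j<m. PP n c \<beta> i j * (comp_mat n c *\<^sub>v \<phi>) $ j) + PP n c \<beta> i m * (comp_mat n c *\<^sub>v \<phi>) $ m"
      unfolding nm by simp
    also have "(\<Sum>j<m. PP n c \<beta> i j * (comp_mat n c *\<^sub>v \<phi>) $ j) = (\<Sum>j<m. PP n c \<beta> i j * \<phi> $ Suc j)"
    proof (rule sum.cong)
      fix j assume "j \<in> {..<m}"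
      then have j: "j < n" "j \<noteq> n - 1" using nm by auto
      show "PP n c \<beta> i j * (comp_mat n c *\<^sub>v \<phi>) $ j = PP n c \<beta> i j * \<phi> $ Suc j"
        using comp_mat_mult[OF phi j(1), of c] j(2) by simp
    qed simp
    also have "PP n c \<beta> i m * (comp_mat n c *\<^sub>v \<phi>) $ m = - \<beta> i * (\<Sum>l<n. c (n - l) * \<phi> $ l)"
    proof -
      have m1: "m < n" "m = n - 1" using nm by auto
      have eq: "(comp_mat n c *\<^sub>v \<phi>) $ m = - (\<Sum>l<n. c (n - l) * \<phi> $ l)"
        using comp_mat_mult[OF phi m1(1), of c] m1(2) by simp
      show ?thesis unfolding eq PP_last[OF i, of c \<beta>, folded m1(2)] by simp
    qed
    finally show ?thesis by simp
  qed
  also have "(\<Sum>j<m. PP n c \<beta> i j * \<phi> $ Suc j) - \<beta> i * (\<Sum>l<n. c (n - l) * \<phi> $ l) = (\<Sum>l<n. cL l * \<phi> $ l)"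
  proof -
    have "(\<Sum>l<n. cL l * \<phi> $ l) = cL 0 * \<phi> $ 0 + (\<Sum>j<m. cL (Suc j) * \<phi> $ Suc j)"
      unfolding nm sum.lessThan_Suc_shift ..
    also have "\<dots> = (\<Sum>j<m. PP n c \<beta> i j * \<phi> $ Suc j) - \<beta> i * (ch n c 0 * \<phi> $ 0 + (\<Sum>j<m. ch n c (Suc j) * \<phi> $ Suc j))"
      unfolding cL_def by (simp add: algebra_simps sum_subtractf sum_distrib_left)
    also have "ch n c 0 * \<phi> $ 0 + (\<Sum>j<m. ch n c (Suc j) * \<phi> $ Suc j) = (\<Sum>l<n. ch n c l * \<phi> $ l)"
      unfolding nm sum.lessThan_Suc_shift ..
    also have "\<dots> = (\<Sum>l<n. c (n - l) * \<phi> $ l)"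
      by (rule sum.cong) (auto simp: ch_def)
    finally show ?thesis by simp
  qed
  also have "(\<Sum>l<n. cL l * \<phi> $ l) = (\<Sum>l<n. cR l * \<phi> $ l)"
    by (rule sum.cong) (use coef_eq[OF i] in \<open>auto simp: cL_def cR_def\<close>)
  also have "(\<Sum>l<n. cR l * \<phi> $ l) = (transpose_mat (comp_mat n c) *\<^sub>v vec n (\<lambda>l. \<Sum>j<n. PP n c \<beta> l j * \<phi> $ j)) $ i"
  proof -
    have "(transpose_mat (comp_mat n c) *\<^sub>v vec n (\<lambda>l. \<Sum>j<n. PP n c \<beta> l j * \<phi> $ j)) $ i =
       (if i = 0 then 0 else (\<Sum>j<n. PP n c \<beta> (i - 1) j * \<phi> $ j)) - c (n - i) * (\<Sum>j<n. PP n c \<beta> (n - 1) j * \<phi> $ j)"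
      using At_mult[of "vec n (\<lambda>l. \<Sum>j<n. PP n c \<beta> l j * \<phi> $ j)" n i c] i by simp
    also have "(\<Sum>j<n. PP n c \<beta> (n - 1) j * \<phi> $ j) = (\<Sum>j<n. \<beta> j * \<phi> $ j)"
      by (rule sum.cong) (auto simp: PP_last2[of _ n c \<beta>, simplified])
    moreover have "(\<Sum>l<n. cR l * \<phi> $ l) = (\<Sum>l<n. (if i = 0 then 0 else PP n c \<beta> (i - 1) l) * \<phi> $ l) - c (n - i) * (\<Sum>l<n. \<beta> l * \<phi> $ l)"
      unfolding cR_def using i by (simp add: ch_def left_diff_distrib sum_subtractf sum_distrib_left mult.assoc)
    moreover have "(\<Sum>l<n. (if i = 0 then 0 else PP n c \<beta> (i - 1) l) * \<phi> $ l) = (if i = 0 then 0 else (\<Sum>j<n. PP n c \<beta> (i - 1) j * \<phi> $ j))"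
      by (cases "i = 0") simp_all
    ultimately show ?thesis by simp
  qed
  finally show ?thesis .
qed



definition app :: "real poly \<Rightarrow> (nat \<Rightarrow> real) \<Rightarrow> nat \<Rightarrow> real" where
  "app p y i = (\<Sum>j<Suc (degree p). coeff p j * y (i + j))"

lemma app_bound: assumes "degree p < m"
  shows "app p y i = (\<Sum>j<m. coeff p j * y (i + j))"
proof -
  have "(\<Sum>j<m. coeff p j * y (i + j)) = (\<Sum>j<Suc (degree p). coeff p j * y (i + j))"
    by (rule sum.mono_neutral_right) (use assms in \<open>auto intro!: coeff_eq_0\<close>)
  then show ?thesis unfolding app_def by simp
qed

lemma app_0[simp]: "app 0 y i = 0" unfolding app_def by simp

lemma app_add: "app (p + q) y i = app p y i + app q y i"
proof -
  define m where "m = Suc (max (degree p) (degree q))"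
  have "degree (p+q) < m" "degree p < m" "degree q < m" unfolding m_def
    using degree_add_le_max[of p q] by auto
  note b = app_bound[OF this(1)] app_bound[OF this(2)] app_bound[OF this(3)]
  show ?thesis unfolding b by (simp add: coeff_add distrib_right sum.distrib)
qed

lemma app_smult: "app (Polynomial.smult a p) y i = a * app p y i"
proof -
  have d: "degree (Polynomial.smult a p) < Suc (degree p)" using degree_smult_le[of a p] by auto
  show ?thesis unfolding app_bound[OF d] app_def[of p] by (simp only: coeff_smult sum_distrib_left mult.assoc)
qed

lemma app_pCons: "app (pCons a p) y i = a * y i + app p y (Suc i)"
proof -
  define m where "m = Suc (degree p)"
  have d1: "degree (pCons a p) < Suc m" unfolding m_def using degree_pCons_le[of a p] by auto
  have d2: "degree p < m" unfolding m_def by auto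
  show ?thesis unfolding app_bound[OF d1] app_bound[OF d2] sum.lessThan_Suc_shift
    by (simp add: coeff_pCons_Suc)
qed

lemma app_mult: "app (p * q) y i = app p (app q y) i"
proof (induction p arbitrary: i rule: pCons_induct)
  case 0
  then show ?case by (simp add: app_def)
next
  case (pCons a p)
  have "app (pCons a p * q) y i = a * app q y i + app (p * q) y (Suc i)"
    by (simp add: mult_pCons_left app_add app_smult app_pCons)
  also have "\<dots> = app (pCons a p) (app q y) i" using pCons.IH by (simp add: app_pCons)
  finally show ?case .
qed

lemma app_comm: "app p (app q y) i = app q (app p y) i"
  by (metis app_mult mult.commute)

lemma app_monic_split: assumes "degree Q = d" "coeff Q d = 1"
  shows "app Q y i = y (i + d) + (\<Sum>j<d. coeff Q j * y (i + j))"
  unfolding app_def using assms by simp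

lemma rec_zero: assumes "degree Q = d" "coeff Q d = 1"
  and "\<And>i. app Q z i = 0" and "\<And>k. k < d \<Longrightarrow> z k = 0"
shows "z k = 0"
proof (induction k rule: less_induct)
  case (less k)
  show ?case
  proof (cases "k < d")
    case True then show ?thesis using assms(4) by auto
  next
    case False
    then obtain i where k: "k = i + d" by (metis add.commute le_add_diff_inverse not_less)
    have "(\<Sum>j<d. coeff Q j * z (i + j)) = 0"
      by (rule sum.neutral) (use less k in auto)
    then show ?thesis using assms(3)[of i] app_monic_split[OF assms(1,2), of z i] k by simp
  qed
qed

function imp :: "real poly \<Rightarrow> nat \<Rightarrow> real" where
  "imp Q k = (if k < degree Q then (if k = degree Q - 1 then 1 else 0)
     else - (\<Sum>j<degree Q. coeff Q j * imp Q (k - degree Q + j)))"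
  by auto
termination
  by (relation "Wellfounded.measure (\<lambda>(Q,k). k)") auto

declare imp.simps[simp del]

lemma imp_init: "k < degree Q \<Longrightarrow> imp Q k = (if k = degree Q - 1 then 1 else 0)"
  by (simp add: imp.simps)

lemma imp_rec: assumes "coeff Q (degree Q) = 1" shows "app Q (imp Q) i = 0"
proof -
  have "imp Q (i + degree Q) = - (\<Sum>j<degree Q. coeff Q j * imp Q (i + j))"
    by (subst imp.simps) (simp add: add.commute)
  then show ?thesis using app_monic_split[of Q "degree Q" "imp Q" i] assms by simp
qed

lemma imp_ann: assumes Q: "coeff Q (degree Q) = 1" and "\<And>i. app t (imp Q) i = 0"
  shows "Q dvd t"
proof -
  define r where "r = t mod Q"
  have Q0: "Q \<noteq> 0" using Q by auto
  have t: "t = Q * (t div Q) + r" unfolding r_def by simp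
  have ar: "app r (imp Q) i = 0" for i
  proof -
    have "app t (imp Q) i = app (t div Q) (app Q (imp Q)) i + app r (imp Q) i"
      by (subst t) (simp add: app_add app_mult[symmetric] mult.commute)
    moreover have "app (t div Q) (app Q (imp Q)) i = 0"
      by (simp add: app_def[of "t div Q"] imp_rec[OF Q])
    ultimately show ?thesis using assms(2) by simp
  qed
  have "r = 0"
  proof (rule ccontr)
    assume r0: "r \<noteq> 0"
    define d' where "d' = degree r"
    have dl: "d' < degree Q" unfolding d'_def r_def
      using degree_mod_less[of Q t] r0 Q0 unfolding r_def
      by (metis degree_mod_less' r_def)
    have "app r (imp Q) (degree Q - 1 - d') = (\<Sum>j<Suc d'. coeff r j * imp Q (degree Q - 1 - d' + j))"
      unfolding app_def d'_def ..
    also have "\<dots> = coeff r d'"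
    proof -
      have "(\<Sum>j<Suc d'. coeff r j * imp Q (degree Q - 1 - d' + j)) =
            (\<Sum>j<Suc d'. if j = d' then coeff r d' else 0)"
        by (rule sum.cong) (use dl in \<open>auto simp: imp_init\<close>)
      then show ?thesis by simp
    qed
    finally have "coeff r d' = 0" using ar by simp
    then show False using r0 unfolding d'_def by simp
  qed
  then show ?thesis unfolding r_def by (simp add: mod_eq_0_iff_dvd)
qed


definition cpoly :: "nat \<Rightarrow> (nat \<Rightarrow> real) \<Rightarrow> real poly" where
  "cpoly n c = monom 1 n + (\<Sum>j<n. monom (c (n - j)) j)"

definition bpoly :: "nat \<Rightarrow> (nat \<Rightarrow> real) \<Rightarrow> real poly" where
  "bpoly n b = (\<Sum>j<n. monom (b (n - j)) j)"

lemma coeff_cpoly: "coeff (cpoly n c) k = (if k = n then 1 else if k < n then c (n - k) else 0)"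
proof -
  have "(\<Sum>j<n. coeff (monom (c (n - j)) j) k) = (\<Sum>j<n. if j = k then c (n - j) else 0)"
    by (rule sum.cong) (auto simp: coeff_monom)
  then show ?thesis unfolding cpoly_def by (auto simp: coeff_sum coeff_monom)
qed

lemma coeff_bpoly: "coeff (bpoly n b) k = (if k < n then b (n - k) else 0)"
proof -
  have "(\<Sum>j<n. coeff (monom (b (n - j)) j) k) = (\<Sum>j<n. if j = k then b (n - j) else 0)"
    by (rule sum.cong) (auto simp: coeff_monom)
  then show ?thesis unfolding bpoly_def by (auto simp: coeff_sum coeff_monom)
qed

lemma degree_cpoly: "degree (cpoly n c) = n"
proof (rule antisym)
  show "degree (cpoly n c) \<le> n" by (rule degree_le) (auto simp: coeff_cpoly)
  show "n \<le> degree (cpoly n c)" by (rule le_degree) (auto simp: coeff_cpoly)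
qed

lemma lead_cpoly: "coeff (cpoly n c) (degree (cpoly n c)) = 1"
  by (simp add: degree_cpoly coeff_cpoly)

lemma cpoly_nz: "cpoly n c \<noteq> 0"
  using lead_cpoly[of n c] by auto

lemma degree_bpoly: "n \<ge> 1 \<Longrightarrow> degree (bpoly n b) < n"
proof -
  assume "n \<ge> 1"
  have "degree (bpoly n b) \<le> n - 1" by (rule degree_le) (auto simp: coeff_bpoly)
  then show ?thesis using \<open>n \<ge> 1\<close> by simp
qed

lemma app_zero_seq: "(\<And>k. y k = 0) \<Longrightarrow> app p y i = 0"
  unfolding app_def by simp

lemma map_poly_of_real_mult:
  "map_poly (of_real :: real \<Rightarrow> complex) (p * q) = map_poly of_real p * map_poly of_real q"
  by (simp add: poly_eq_iff coeff_mult coeff_map_poly)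

lemma sum_rev_idx: "(\<Sum>k=1..(n::nat). g k) = (\<Sum>i<n. g (n - i))"
  apply (rule sum.reindex_bij_witness[of _ "\<lambda>i. n - i" "\<lambda>k. n - k"])
  by (simp_all add: atLeastAtMost_iff)

lemma poly_cpoly: "poly (map_poly of_real (cpoly n a)) (s::complex) =
   s ^ n + (\<Sum>k=1..n. of_real (a k) * s ^ (n - k))"
proof -
  have d: "degree (map_poly (of_real :: real \<Rightarrow> complex) (cpoly n a)) = n"
    by (simp add: degree_map_poly degree_cpoly)
  have "poly (map_poly of_real (cpoly n a)) s = (\<Sum>i\<le>n. of_real (coeff (cpoly n a) i) * s ^ i)"
    unfolding poly_altdef d by (simp add: coeff_map_poly)
  also have "\<dots> = (\<Sum>i<n. of_real (coeff (cpoly n a) i) * s ^ i) + s ^ n"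
    by (simp add: lessThan_Suc_atMost[symmetric] coeff_cpoly)
  also have "(\<Sum>i<n. of_real (coeff (cpoly n a) i) * s ^ i) = (\<Sum>i<n. of_real (a (n - i)) * s ^ (n - (n - i)))"
    by (rule sum.cong) (auto simp: coeff_cpoly)
  also have "\<dots> = (\<Sum>k=1..n. of_real (a k) * s ^ (n - k))" by (rule sum_rev_idx[symmetric])
  finally show ?thesis by simp
qed

lemma poly_bpoly: "poly (map_poly of_real (bpoly n b)) (s::complex) =
   (\<Sum>k=1..n. of_real (b k) * s ^ (n - k))"
proof -
  have "poly (map_poly of_real (bpoly n b)) s = (\<Sum>i<Suc (degree (map_poly (of_real :: real \<Rightarrow> complex) (bpoly n b))). of_real (coeff (bpoly n b) i) * s ^ i)"
    unfolding poly_altdef by (simp add: coeff_map_poly lessThan_Suc_atMost)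
  also have "\<dots> = (\<Sum>i<n + Suc (degree (bpoly n b)). of_real (coeff (bpoly n b) i) * s ^ i)"
    by (rule sum.mono_neutral_left) (auto simp: degree_map_poly coeff_eq_0)
  also have "\<dots> = (\<Sum>i<n. of_real (coeff (bpoly n b) i) * s ^ i)"
    by (rule sum.mono_neutral_right) (auto simp: coeff_bpoly)
  also have "\<dots> = (\<Sum>i<n. of_real (b (n - i)) * s ^ (n - (n - i)))"
    by (rule sum.cong) (auto simp: coeff_bpoly)
  also have "\<dots> = (\<Sum>k=1..n. of_real (b k) * s ^ (n - k))" by (rule sum_rev_idx[symmetric])
  finally show ?thesis .
qed

lemma coprime_ab: assumes "assumption1 n a b" shows "coprime (cpoly n a) (bpoly n b)"
proof (rule ccontr)
  assume nc: "\<not> coprime (cpoly n a) (bpoly n b)"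
  define g where "g = gcd (cpoly n a) (bpoly n b)"
  have g0: "g \<noteq> 0" unfolding g_def using cpoly_nz by simp
  have "\<not> is_unit g" unfolding g_def using nc is_unit_gcd by blast
  then have dg: "degree g \<noteq> 0" using is_unit_iff_degree[OF g0] by simp
  define gc where "gc = map_poly (of_real :: real \<Rightarrow> complex) g"
  have "degree gc = degree g" unfolding gc_def by (simp add: degree_map_poly)
  then have "\<not> constant (poly gc)" using dg constant_degree by metis
  then obtain z where z: "poly gc z = 0" using fundamental_theorem_of_algebra by blast
  have "g dvd cpoly n a" unfolding g_def by simp
  then obtain k where k: "cpoly n a = g * k" by (elim dvdE)
  have "g dvd bpoly n b" unfolding g_def by simp
  then obtain k' where k': "bpoly n b = g * k'" by (elim dvdE)
  have "poly (map_poly of_real (cpoly n a)) z = 0"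
    unfolding k map_poly_of_real_mult using z unfolding gc_def by simp
  moreover have "poly (map_poly of_real (bpoly n b)) z = 0"
    unfolding k' map_poly_of_real_mult using z unfolding gc_def by simp
  ultimately show False using assms unfolding assumption1_def poly_cpoly poly_bpoly by blast
qed


lemma key_poly:
  fixes A B C G :: "real poly"
  assumes dA: "degree A = n" and lA: "coeff A n = 1"
    and dC: "degree C = n" and lC: "coeff C n = 1"
    and cop: "coprime A B"
    and dG: "\<And>j. j \<ge> 2 * n \<Longrightarrow> coeff G j = 0"
    and h1: "\<And>i. i < n \<Longrightarrow> app G (app A (imp (A * C))) i = 0"
    and h2: "\<And>i. i < n \<Longrightarrow> app G (app B (imp (A * C))) i = 0"
  shows "G = 0"
proof -
  define E where "E = imp (A * C)"
  have A0: "A \<noteq> 0" and C0: "C \<noteq> 0" using lA lC by auto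
  have dAC: "degree (A * C) = 2 * n" using degree_mult_eq[OF A0 C0] dA dC by simp
  have lAC: "coeff (A * C) (degree (A * C)) = 1"
    using lA lC dA dC by (simp add: lead_coeff_mult)
  have Erec: "app (A * C) E i = 0" for i unfolding E_def by (rule imp_rec[OF lAC])
  have appE0: "app p (app (A * C) E) i = 0" for p i by (rule app_zero_seq) (simp add: Erec)
  define z1 where "z1 = app (G * A) E"
  have "app C z1 i = 0" for i
  proof -
    have "app C z1 i = app (C * (G * A)) E i" unfolding z1_def by (simp add: app_mult)
    also have "C * (G * A) = G * (A * C)" by (simp add: ac_simps)
    also have "app (G * (A * C)) E i = 0" by (simp add: app_mult appE0)
    finally show ?thesis .
  qed
  moreover have "z1 k = 0" if "k < n" for k unfolding z1_def E_def app_mult using h1 that by simp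
  ultimately have "z1 k = 0" for k using rec_zero[OF dC lC, of z1] by blast
  then have "A * C dvd G * A" using imp_ann[OF lAC, of "G * A"] unfolding z1_def E_def by blast
  then have "A * C dvd A * G" by (simp add: ac_simps)
  then have "C dvd G" using A0 dvd_mult_cancel_left by blast
  then obtain D where GD: "G = C * D" by (elim dvdE)
  have dD: "D = 0 \<or> degree D < n"
  proof (cases "D = 0")
    case False
    then have "G \<noteq> 0" using GD C0 by simp
    then have "degree G < 2 * n" using dG by (meson leading_coeff_0_iff not_less)
    then show ?thesis using degree_mult_eq[OF C0 False] GD dC by simp
  qed simp
  define z2 where "z2 = app (G * B) E"
  have "app A z2 i = 0" for i
  proof -
    have "app A z2 i = app (A * (G * B)) E i" unfolding z2_def by (simp add: app_mult)
    also have "A * (G * B) = (D * B) * (A * C)" by (simp add: GD ac_simps)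
    also have "app ((D * B) * (A * C)) E i = 0" by (simp add: app_mult appE0)
    finally show ?thesis .
  qed
  moreover have "z2 k = 0" if "k < n" for k unfolding z2_def E_def app_mult using h2 that by simp
  ultimately have "z2 k = 0" for k using rec_zero[OF dA lA, of z2] by blast
  then have "A * C dvd G * B" using imp_ann[OF lAC, of "G * B"] unfolding z2_def E_def by blast
  then have "C * A dvd C * (D * B)" by (simp add: GD ac_simps)
  then have "A dvd D * B" using C0 dvd_mult_cancel_left by blast
  then have "A dvd D" using cop by (simp add: coprime_dvd_mult_left_iff)
  then have "D = 0" using dD dvd_imp_degree_le[of A D] dA by fastforce
  then show ?thesis using GD by simp
qed


lemma L_b_carrier[simp]: "L_b n b \<in> carrier_mat n n"
  unfolding L_b_def by simp

lemma L_b_mult: assumes v: "v \<in> carrier_vec n" and i: "i < n"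
  shows "(L_b n b *\<^sub>v v) $ i = (if i = n - 1 then (\<Sum>j<n. b (n - j) * v $ j) else 0)"
proof -
  have "(L_b n b *\<^sub>v v) $ i = (\<Sum>j<n. L_b n b $$ (i, j) * v $ j)"
    by (rule mat_vec_idx[OF L_b_carrier v i])
  also have "\<dots> = (\<Sum>j<n. (if i = n - 1 then b (n - j) * v $ j else 0))"
    by (rule sum.cong) (auto simp: L_b_def i)
  also have "\<dots> = (if i = n - 1 then (\<Sum>j<n. b (n - j) * v $ j) else 0)"
    by auto
  finally show ?thesis .
qed

lemma A_f_carrier[simp]: "A_f n a b c \<in> carrier_mat (2 * n) (2 * n)"
proof -
  have "A_f n a b c \<in> carrier_mat (n + n) (n + n)" unfolding A_f_def
    by (rule four_block_carrier_mat) auto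
  then show ?thesis by (simp add: mult_2)
qed

lemma reach:
  assumes n: "n \<ge> 1" and A1: "assumption1 n a b"
  shows "reachable (2 * n) (A_f n a b c) (B_f n)"
proof -
  define A where "A = cpoly n a"
  define B where "B = bpoly n b"
  define C where "C = cpoly n c"
  define E where "E = imp (A * C)"
  define hh where "hh = app A E"
  define gg where "gg = app B E"
  have dA: "degree A = n" and lA: "coeff A n = 1" unfolding A_def by (auto simp: degree_cpoly coeff_cpoly)
  have dC: "degree C = n" and lC: "coeff C n = 1" unfolding C_def by (auto simp: degree_cpoly coeff_cpoly)
  have dB: "degree B < n" unfolding B_def using degree_bpoly n by auto
  have A0: "A \<noteq> 0" and C0: "C \<noteq> 0" using lA lC by auto
  have dAC: "degree (A * C) = 2 * n" using degree_mult_eq[OF A0 C0] dA dC by simp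
  have lAC: "coeff (A * C) (degree (A * C)) = 1"
    using lA lC dA dC by (simp add: lead_coeff_mult)
  have Erec: "app (A * C) E i = 0" for i unfolding E_def by (rule imp_rec[OF lAC])
  have Einit: "k < 2 * n \<Longrightarrow> E k = (if k = 2 * n - 1 then 1 else 0)" for k
    unfolding E_def using imp_init[of k "A * C"] dAC by simp
  have hh_init: "hh i = (if i = n - 1 then 1 else 0)" if i: "i < n" for i
  proof -
    have "hh i = E (i + n) + (\<Sum>j<n. coeff A j * E (i + j))"
      unfolding hh_def by (rule app_monic_split[OF dA lA])
    also have "(\<Sum>j<n. coeff A j * E (i + j)) = 0"
      by (rule sum.neutral) (use i in \<open>auto simp: Einit\<close>)
    also have "E (i + n) = (if i = n - 1 then 1 else 0)" using i Einit[of "i + n"] by auto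
    finally show ?thesis by simp
  qed
  have gg_init: "gg i = 0" if i: "i < n" for i
  proof -
    have "gg i = (\<Sum>j<n. coeff B j * E (i + j))"
      unfolding gg_def by (rule app_bound[OF dB])
    also have "\<dots> = 0"
      by (rule sum.neutral) (use i in \<open>auto simp: Einit\<close>)
    finally show ?thesis .
  qed
  have hh_rec: "hh (k + n) = - (\<Sum>j<n. c (n - j) * hh (k + j))" for k
  proof -
    have "app C hh k = app (A * C) E k" unfolding hh_def by (simp add: app_mult[symmetric] ac_simps)
    then have "app C hh k = 0" using Erec by simp
    moreover have "app C hh k = hh (k + n) + (\<Sum>j<n. coeff C j * hh (k + j))"
      by (rule app_monic_split[OF dC lC])
    moreover have "(\<Sum>j<n. coeff C j * hh (k + j)) = (\<Sum>j<n. c (n - j) * hh (k + j))"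
      by (rule sum.cong) (auto simp: C_def coeff_cpoly)
    ultimately show ?thesis by simp
  qed
  have gg_rec: "gg (k + n) = (\<Sum>j<n. b (n - j) * hh (k + j)) - (\<Sum>j<n. a (n - j) * gg (k + j))" for k
  proof -
    have "app A gg k = app B hh k" unfolding hh_def gg_def by (rule app_comm)
    moreover have "app A gg k = gg (k + n) + (\<Sum>j<n. coeff A j * gg (k + j))"
      by (rule app_monic_split[OF dA lA])
    moreover have "(\<Sum>j<n. coeff A j * gg (k + j)) = (\<Sum>j<n. a (n - j) * gg (k + j))"
      by (rule sum.cong) (auto simp: A_def coeff_cpoly)
    moreover have "app B hh k = (\<Sum>j<n. coeff B j * hh (k + j))"
      by (rule app_bound[OF dB])
    moreover have "(\<Sum>j<n. coeff B j * hh (k + j)) = (\<Sum>j<n. b (n - j) * hh (k + j))"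
      by (rule sum.cong) (auto simp: B_def coeff_bpoly)
    ultimately show ?thesis by simp
  qed
  define V1 where "V1 k = vec n (\<lambda>i. hh (k + i))" for k
  define V2 where "V2 k = vec n (\<lambda>i. gg (k + i))" for k
  define V where "V k = V1 k @\<^sub>v V2 k" for k
  have V1c[simp]: "V1 k \<in> carrier_vec n" for k unfolding V1_def by simp
  have V2c[simp]: "V2 k \<in> carrier_vec n" for k unfolding V2_def by simp
  have Vc[simp]: "V k \<in> carrier_vec (2 * n)" for k unfolding V_def mult_2 by simp
  have dV[simp]: "dim_vec (V k) = 2 * n" for k unfolding V_def V1_def V2_def by simp
  have Vidx: "i < 2 * n \<Longrightarrow> V k $ i = (if i < n then hh (k + i) else gg (k + i - n))" for k i
    unfolding V_def V1_def V2_def by (auto simp: less_diff_conv2 not_less)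
  have step: "A_f n a b c *\<^sub>v V k = V (Suc k)" for k
  proof -
    have "A_f n a b c *\<^sub>v V k =
      (comp_mat n c *\<^sub>v V1 k + 0\<^sub>m n n *\<^sub>v V2 k) @\<^sub>v (L_b n b *\<^sub>v V1 k + comp_mat n a *\<^sub>v V2 k)"
      unfolding A_f_def V_def by (rule four_block_mat_mult_vec) auto
    also have "comp_mat n c *\<^sub>v V1 k + 0\<^sub>m n n *\<^sub>v V2 k = V1 (Suc k)"
    proof (rule eq_vecI)
      fix i assume "i < dim_vec (V1 (Suc k))"
      then have i: "i < n" unfolding V1_def by simp
      have "(comp_mat n c *\<^sub>v V1 k + 0\<^sub>m n n *\<^sub>v V2 k) $ i = (comp_mat n c *\<^sub>v V1 k) $ i"
        using i by simp
      also have "\<dots> = V1 (Suc k) $ i"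
      proof (cases "i = n - 1")
        case True
        have "(\<Sum>j<n. c (n - j) * V1 k $ j) = (\<Sum>j<n. c (n - j) * hh (k + j))"
          by (rule sum.cong) (auto simp: V1_def)
        then show ?thesis using True i n comp_mat_mult[OF V1c i, of c k] hh_rec[of k]
          by (simp add: V1_def)
      next
        case False
        then show ?thesis using i comp_mat_mult[OF V1c i, of c k] by (simp add: V1_def)
      qed
      finally show "(comp_mat n c *\<^sub>v V1 k + 0\<^sub>m n n *\<^sub>v V2 k) $ i = V1 (Suc k) $ i" .
    qed (simp add: V1_def)
    also have "L_b n b *\<^sub>v V1 k + comp_mat n a *\<^sub>v V2 k = V2 (Suc k)"
    proof (rule eq_vecI)
      fix i assume "i < dim_vec (V2 (Suc k))"
      then have i: "i < n" unfolding V2_def by simp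
      have "(L_b n b *\<^sub>v V1 k + comp_mat n a *\<^sub>v V2 k) $ i = (L_b n b *\<^sub>v V1 k) $ i + (comp_mat n a *\<^sub>v V2 k) $ i"
        using i by simp
      also have "\<dots> = V2 (Suc k) $ i"
      proof (cases "i = n - 1")
        case True
        have "(\<Sum>j<n. a (n - j) * V2 k $ j) = (\<Sum>j<n. a (n - j) * gg (k + j))"
          by (rule sum.cong) (auto simp: V2_def)
        moreover have "(\<Sum>j<n. b (n - j) * V1 k $ j) = (\<Sum>j<n. b (n - j) * hh (k + j))"
          by (rule sum.cong) (auto simp: V1_def)
        ultimately show ?thesis using True i n comp_mat_mult[OF V2c i, of a k] L_b_mult[OF V1c i, of b k] gg_rec[of k]
          by (simp add: V2_def)
      next
        case False
        then show ?thesis using i comp_mat_mult[OF V2c i, of a k] L_b_mult[OF V1c i, of b k] by (simp add: V2_def)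
      qed
      finally show "(L_b n b *\<^sub>v V1 k + comp_mat n a *\<^sub>v V2 k) $ i = V2 (Suc k) $ i" .
    qed (simp add: V2_def)
    finally show ?thesis unfolding V_def .
  qed
  have pow: "(A_f n a b c ^\<^sub>m k) *\<^sub>v V m = V (m + k)" for k m
  proof (induction k arbitrary: m)
    case 0
    have "dim_row (A_f n a b c) = 2 * n" using A_f_carrier[of n a b c] by blast
    then show ?case using Vc[of m] by simp
  next
    case (Suc k)
    have "(A_f n a b c ^\<^sub>m Suc k) *\<^sub>v V m = (A_f n a b c ^\<^sub>m k * A_f n a b c) *\<^sub>v V m" by simp
    also have "\<dots> = A_f n a b c ^\<^sub>m k *\<^sub>v (A_f n a b c *\<^sub>v V m)"
      by (rule assoc_mult_mat_vec[of _ "2*n" "2*n" _ "2*n"]) auto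
    also have "\<dots> = V (m + Suc k)" using Suc step by simp
    finally show ?case .
  qed
  have Bf: "B_f n = V 0"
  proof (rule eq_vecI)
    show "dim_vec (B_f n) = dim_vec (V 0)" by (simp add: B_f_def)
    fix i assume "i < dim_vec (V 0)"
    then have i: "i < 2 * n" by simp
    have b: "B_f n $ i = (if i = n - 1 then 1 else 0)" unfolding B_f_def using i by (rule index_vec)
    have v: "V 0 $ i = (if i < n then hh i else gg (i - n))" using Vidx[OF i, of 0] by simp
    show "B_f n $ i = V 0 $ i"
    proof (cases "i < n")
      case True
      then show ?thesis unfolding b v using hh_init[OF True] by simp
    next
      case False
      then have "i - n < n" "i \<noteq> n - 1" using i n by auto
      then show ?thesis unfolding b v using False gg_init[of "i - n"] by simp
    qed
  qed
  define K where "K = mat (2 * n) (2 * n) (\<lambda>(i, j). ((A_f n a b c ^\<^sub>m j) *\<^sub>v B_f n) $ i)"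
  have Kc: "K \<in> carrier_mat (2 * n) (2 * n)" unfolding K_def by simp
  have Kidx: "i < 2 * n \<Longrightarrow> j < 2 * n \<Longrightarrow> K $$ (i, j) = V j $ i" for i j
    unfolding K_def Bf using pow[of j 0] by simp
  have "det K \<noteq> 0"
  proof
    assume "det K = 0"
    then obtain v where v: "v \<in> carrier_vec (2 * n)" "v \<noteq> 0\<^sub>v (2 * n)" "K *\<^sub>v v = 0\<^sub>v (2 * n)"
      using det_0_iff_vec_prod_zero_field[OF Kc] by blast
    define G where "G = (\<Sum>j<2 * n. monom (v $ j) j)"
    have cG: "coeff G j = (if j < 2 * n then v $ j else 0)" for j
    proof -
      have "(\<Sum>i<2 * n. coeff (monom (v $ i) i) j) = (\<Sum>i<2 * n. if i = j then v $ i else 0)"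
        by (rule sum.cong) (auto simp: coeff_monom)
      then show ?thesis unfolding G_def by (auto simp: coeff_sum)
    qed
    have dG: "degree G < 2 * n"
    proof -
      have "degree G \<le> 2 * n - 1" by (rule degree_le) (auto simp: cG)
      then show ?thesis using n by simp
    qed
    have Kv: "(\<Sum>j<2 * n. V j $ i * v $ j) = 0" if i: "i < 2 * n" for i
    proof -
      have "(K *\<^sub>v v) $ i = (\<Sum>j<2 * n. K $$ (i, j) * v $ j)" by (rule mat_vec_idx[OF Kc v(1) i])
      also have "\<dots> = (\<Sum>j<2 * n. V j $ i * v $ j)" by (rule sum.cong) (auto simp: Kidx i)
      finally show ?thesis using v(3) i by simp
    qed
    have h1: "app G hh i = 0" if i: "i < n" for i
    proof -
      have "app G hh i = (\<Sum>j<2 * n. coeff G j * hh (i + j))" by (rule app_bound[OF dG])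
      also have "\<dots> = (\<Sum>j<2 * n. V j $ i * v $ j)"
        by (rule sum.cong) (use i in \<open>auto simp: cG Vidx add_ac\<close>)
      finally show ?thesis using Kv[of i] i by simp
    qed
    have h2: "app G gg i = 0" if i: "i < n" for i
    proof -
      have "app G gg i = (\<Sum>j<2 * n. coeff G j * gg (i + j))" by (rule app_bound[OF dG])
      also have "\<dots> = (\<Sum>j<2 * n. V j $ (n + i) * v $ j)"
        by (rule sum.cong) (use i in \<open>auto simp: cG Vidx add_ac\<close>)
      finally show ?thesis using Kv[of "n + i"] i by simp
    qed
    have "G = 0"
      by (rule key_poly[OF dA lA dC lC _ _ h1[unfolded hh_def E_def] h2[unfolded gg_def E_def]])
        (use coprime_ab[OF A1] cG in \<open>auto simp: A_def B_def\<close>)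
    then have vi: "v $ i = 0" if "i < 2 * n" for i using cG[of i] that by simp
    have "v = 0\<^sub>v (2 * n)" by (rule eq_vecI) (use vi v(1) in auto)
    then show False using v(2) by simp
  qed
  then have "vec_space.rank (2 * n) K = 2 * n" by (rule vec_space.low_rank_det_zero[OF Kc])
  then show ?thesis unfolding reachable_def K_def .
qed




lemma sol_int: fixes z F :: "real \<Rightarrow> real vec" shows "is_solution m z F z0 \<Longrightarrow> i < m \<Longrightarrow> 0 \<le> t \<Longrightarrow>
   ((\<lambda>s. F s $ i) has_integral (z t $ i - z0 $ i)) {0..t}"
  unfolding is_solution_def by blast

lemma sol_eq: fixes z F :: "real \<Rightarrow> real vec" assumes "is_solution m z F z0" "i < m" "0 \<le> t"
  shows "z t $ i = z0 $ i + integral {0..t} (\<lambda>s. F s $ i)"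
  using integral_unique[OF sol_int[OF assms]] by simp

lemma sol_cont: fixes z F :: "real \<Rightarrow> real vec" assumes sol: "is_solution m z F z0" and i: "i < m"
  shows "continuous_on {0..T} (\<lambda>t. z t $ i)"
proof (cases "0 \<le> T")
  case True
  have intT: "(\<lambda>s. F s $ i) integrable_on {0..T}"
    using sol_int[OF sol i True] by blast
  have "continuous_on {0..T} (\<lambda>t. z0 $ i + integral {0..t} (\<lambda>s. F s $ i))"
    by (intro continuous_on_add continuous_on_const indefinite_integral_continuous_1 intT)
  moreover have "\<And>t. t \<in> {0..T} \<Longrightarrow> z t $ i = z0 $ i + integral {0..t} (\<lambda>s. F s $ i)"
    using sol_eq[OF sol i] by auto
  ultimately show ?thesis using continuous_on_cong by (metis (no_types, lifting))
next
  case False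
  then have "{0..T} = {}" by auto
  then show ?thesis by simp
qed

lemma deriv_from_int:
  fixes f g :: "real \<Rightarrow> real"
  assumes g: "continuous_on {0..T} g"
    and I: "\<And>t. t \<in> {0..T} \<Longrightarrow> (g has_integral (f t - f0)) {0..t}"
    and t: "t \<in> {0..T}"
  shows "(f has_real_derivative g t) (at t within {0..T})"
proof -
  have eq: "f s = f0 + integral {0..s} g" if "s \<in> {0..T}" for s
    using integral_unique[OF I[OF that]] by simp
  have "((\<lambda>u. integral {0..u} g) has_vector_derivative g t) (at t within {0..T})"
    by (rule integral_has_vector_derivative[OF g t])
  then have "((\<lambda>u. f0 + integral {0..u} g) has_real_derivative g t) (at t within {0..T})"
    unfolding has_real_derivative_iff_has_vector_derivative[symmetric]
    by (rule DERIV_cong[OF DERIV_add[OF DERIV_const]]) simp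
  then have "((\<lambda>u. f0 + integral {0..u} g) has_vector_derivative g t) (at t within {0..T})"
    unfolding has_real_derivative_iff_has_vector_derivative .
  then have "(f has_vector_derivative g t) (at t within {0..T})"
    by (rule has_vector_derivative_transform[OF t, rotated]) (simp add: eq)
  then show ?thesis unfolding has_real_derivative_iff_has_vector_derivative .
qed

lemma sum_ind: fixes f :: "nat \<Rightarrow> real" assumes "k < n"
  shows "(\<Sum>j<n. (if j = k then 1 else 0) * f j) = f k" "(\<Sum>j<n. (if k = j then 1 else 0) * f j) = f k"
proof -
  have "(\<Sum>j<n. (if j = k then 1 else 0) * f j) = (\<Sum>j<n. if j = k then f j else 0)"
    by (rule sum.cong) auto
  then show "(\<Sum>j<n. (if j = k then 1 else 0) * f j) = f k" using assms by simp
  have "(\<Sum>j<n. (if k = j then 1 else 0) * f j) = (\<Sum>j<n. if j = k then f j else 0)"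
    by (rule sum.cong) auto
  then show "(\<Sum>j<n. (if k = j then 1 else 0) * f j) = f k" using assms by simp
qed

lemma G_f_carrier[simp]: "G_f n \<in> carrier_mat (2 * n) n"
  unfolding G_f_def by simp

lemma G_f_mult: assumes v: "v \<in> carrier_vec n" and i: "i < 2 * n" and n: "n \<ge> 1"
  shows "(G_f n *\<^sub>v v) $ i = (if i = 2 * n - 1 then v $ (n - 1) else 0)"
proof -
  have "(G_f n *\<^sub>v v) $ i = (\<Sum>j<n. G_f n $$ (i, j) * v $ j)"
    by (rule mat_vec_idx[OF G_f_carrier v i])
  also have "\<dots> = (\<Sum>j<n. if i = 2 * n - 1 \<and> j = n - 1 then v $ j else 0)"
    by (rule sum.cong) (use i in \<open>auto simp: G_f_def\<close>)
  also have "\<dots> = (if i = 2 * n - 1 then v $ (n - 1) else 0)"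
    using n by (auto simp: sum.delta)
  finally show ?thesis .
qed

lemma mat_exp_carrier: "M \<in> carrier_mat n n \<Longrightarrow> mat_exp M t \<in> carrier_mat n n"
  unfolding mat_exp_def by auto


theorem theorem1:
  fixes n :: nat and a b c :: "nat \<Rightarrow> real"
    and x0 :: "real vec" and u :: "real \<Rightarrow> real"
    and x \<zeta> \<mu> :: "real \<Rightarrow> real vec"
  assumes n: "n \<ge> 1"
    and A1: "assumption1 n a b"
    and x0: "x0 \<in> carrier_vec n"
    and u: "\<forall>T\<ge>0. u absolutely_integrable_on {0..T}"
    and plant: "is_solution n x (\<lambda>s. A_obs n a *\<^sub>v x s + u s \<cdot>\<^sub>v B_obs n b) x0"
    and filt_u: "is_solution n \<zeta> (\<lambda>s. comp_mat n c *\<^sub>v \<zeta> s + u s \<cdot>\<^sub>v B_r n) (0\<^sub>v n)"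
    and filt_y: "is_solution n \<mu> (\<lambda>s. comp_mat n c *\<^sub>v \<mu> s + (C_obs n \<bullet> x s) \<cdot>\<^sub>v B_r n) (0\<^sub>v n)"
  shows "is_solution (2 * n) (\<lambda>t. \<zeta> t @\<^sub>v \<mu> t)
           (\<lambda>s. A_f n a b c *\<^sub>v (\<zeta> s @\<^sub>v \<mu> s) + u s \<cdot>\<^sub>v B_f n
                 + G_f n *\<^sub>v (mat_exp (transpose_mat (comp_mat n c)) s *\<^sub>v x0))
           (0\<^sub>v (2 * n))
         \<and> reachable (2 * n) (A_f n a b c) (B_f n)"
proof -
  define Ac where "Ac = comp_mat n c"
  define At where "At = transpose_mat (comp_mat n c)"
  define \<beta>b where "\<beta>b i = b (n - i)" for i
  define \<beta>d where "\<beta>d i = c (n - i) - a (n - i)" for i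
  define \<psi>b where "\<psi>b s = vec n (\<lambda>l. \<Sum>j<n. PP n c \<beta>b l j * \<zeta> s $ j)" for s
  define \<psi>d where "\<psi>d s = vec n (\<lambda>l. \<Sum>j<n. PP n c \<beta>d l j * \<mu> s $ j)" for s
  define \<xi> where "\<xi> s = vec n (\<lambda>i. x s $ i - \<psi>b s $ i - \<psi>d s $ i)" for s
  define \<eta> where "\<eta> s = mat_exp At s *\<^sub>v x0" for s
  have xc[simp]: "x s \<in> carrier_vec n" for s using plant unfolding is_solution_def by blast
  have zc[simp]: "\<zeta> s \<in> carrier_vec n" for s using filt_u unfolding is_solution_def by blast
  have mc[simp]: "\<mu> s \<in> carrier_vec n" for s using filt_y unfolding is_solution_def by blast
  have x00: "x 0 = x0" using plant unfolding is_solution_def by blast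
  have z00: "\<zeta> 0 = 0\<^sub>v n" using filt_u unfolding is_solution_def by blast
  have m00: "\<mu> 0 = 0\<^sub>v n" using filt_y unfolding is_solution_def by blast
  have Atc[simp]: "At \<in> carrier_mat n n" unfolding At_def by simp
  have Acc[simp]: "Ac \<in> carrier_mat n n" unfolding Ac_def by simp
  have dx[simp]: "dim_vec (x s) = n" "dim_vec (\<zeta> s) = n" "dim_vec (\<mu> s) = n" for s
    using xc zc mc carrier_vecD by blast+
  have psibc[simp]: "\<psi>b s \<in> carrier_vec n" "\<psi>d s \<in> carrier_vec n" "\<xi> s \<in> carrier_vec n" for s
    unfolding \<psi>b_def \<psi>d_def \<xi>_def by auto
  have xi_idx: "\<xi> s $ i = x s $ i - (\<Sum>j<n. PP n c \<beta>b i j * \<zeta> s $ j) - (\<Sum>j<n. PP n c \<beta>d i j * \<mu> s $ j)"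
    if "i < n" for s i using that unfolding \<xi>_def \<psi>b_def \<psi>d_def by simp
  have Cx: "C_obs n \<bullet> x s = x s $ (n - 1)" for s
  proof -
    have "C_obs n \<bullet> x s = (\<Sum>j<n. (if j = n - 1 then 1 else 0) * x s $ j)"
      unfolding scalar_prod_def by (simp add: C_obs_def atLeast0LessThan)
    also have "\<dots> = x s $ (n - 1)" using n by (intro sum_ind) simp
    finally show ?thesis .
  qed
  define fX where "fX s = (A_obs n a *\<^sub>v x s + u s \<cdot>\<^sub>v B_obs n b)" for s
  define fZ where "fZ s = comp_mat n c *\<^sub>v \<zeta> s + u s \<cdot>\<^sub>v B_r n" for s
  define fM where "fM s = comp_mat n c *\<^sub>v \<mu> s + (C_obs n \<bullet> x s) \<cdot>\<^sub>v B_r n" for s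
  have fX_idx: "fX s $ i = (At *\<^sub>v x s) $ i + \<beta>d i * x s $ (n - 1) + u s * \<beta>b i" if i: "i < n" for s i
  proof -
    have "fX s $ i = (transpose_mat (comp_mat n a) *\<^sub>v x s) $ i + u s * b (n - i)"
      unfolding fX_def A_obs_eq using i by (simp add: B_obs_def)
    then show ?thesis unfolding At_def \<beta>d_def \<beta>b_def using At_mult[OF xc i, of a] At_mult[OF xc i, of c]
      by (simp add: algebra_simps)
  qed
  have fZ_idx: "fZ s $ j = (comp_mat n c *\<^sub>v \<zeta> s) $ j + u s * B_r n $ j" if "j < n" for s j
    unfolding fZ_def using that by (simp add: B_r_def)
  have fM_idx: "fM s $ j = (comp_mat n c *\<^sub>v \<mu> s) $ j + x s $ (n - 1) * B_r n $ j" if "j < n" for s j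
    unfolding fM_def Cx using that by (simp add: B_r_def)
  have filt_b: "(\<Sum>j<n. PP n c \<beta>b i j * fZ s $ j) = (At *\<^sub>v \<psi>b s) $ i + \<beta>b i * u s" if i: "i < n" for i s
  proof -
    have "(\<Sum>j<n. PP n c \<beta>b i j * fZ s $ j) = (\<Sum>j<n. PP n c \<beta>b i j * ((comp_mat n c *\<^sub>v \<zeta> s) $ j + u s * B_r n $ j))"
      by (rule sum.cong) (auto simp: fZ_idx)
    then show ?thesis unfolding filt_id[OF n zc i] At_def \<psi>b_def by simp
  qed
  have filt_d: "(\<Sum>j<n. PP n c \<beta>d i j * fM s $ j) = (At *\<^sub>v \<psi>d s) $ i + \<beta>d i * x s $ (n - 1)" if i: "i < n" for i s
  proof -
    have "(\<Sum>j<n. PP n c \<beta>d i j * fM s $ j) = (\<Sum>j<n. PP n c \<beta>d i j * ((comp_mat n c *\<^sub>v \<mu> s) $ j + x s $ (n - 1) * B_r n $ j))"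
      by (rule sum.cong) (auto simp: fM_idx)
    then show ?thesis unfolding filt_id[OF n mc i] At_def \<psi>d_def by simp
  qed
  have At_xi: "(At *\<^sub>v \<xi> s) $ i = (At *\<^sub>v x s) $ i - (At *\<^sub>v \<psi>b s) $ i - (At *\<^sub>v \<psi>d s) $ i"
    if i: "i < n" for s i
  proof -
    have "i - 1 < n" "n - 1 < n" using i n by auto
    then show ?thesis unfolding At_def At_mult[OF psibc(3) i] At_mult[OF xc i] At_mult[OF psibc(1) i] At_mult[OF psibc(2) i]
      unfolding \<xi>_def by (simp add: algebra_simps)
  qed
  have integrand: "fX s $ i - (\<Sum>j<n. PP n c \<beta>b i j * fZ s $ j) - (\<Sum>j<n. PP n c \<beta>d i j * fM s $ j) = (At *\<^sub>v \<xi> s) $ i"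
    if i: "i < n" for s i
    unfolding fX_idx[OF i] filt_b[OF i] filt_d[OF i] At_xi[OF i] by simp
  have hxi: "((\<lambda>s. (At *\<^sub>v \<xi> s) $ i) has_integral (\<xi> t $ i - x0 $ i)) {0..t}"
    if i: "i < n" and t: "0 \<le> t" for t i
  proof -
    have I1: "((\<lambda>s. fX s $ i) has_integral (x t $ i - x0 $ i)) {0..t}"
      unfolding fX_def by (rule sol_int[OF plant i t])
    have I2: "((\<lambda>s. \<Sum>j<n. PP n c \<beta>b i j * fZ s $ j) has_integral (\<Sum>j<n. PP n c \<beta>b i j * \<zeta> t $ j)) {0..t}"
    proof (rule has_integral_sum, simp, rule has_integral_mult_right)
      fix j assume "j \<in> {..<n}"
      then have j: "j < n" by simp
      show "((\<lambda>s. fZ s $ j) has_integral \<zeta> t $ j) {0..t}"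
        using sol_int[OF filt_u j t] j unfolding fZ_def by simp
    qed
    have I3: "((\<lambda>s. \<Sum>j<n. PP n c \<beta>d i j * fM s $ j) has_integral (\<Sum>j<n. PP n c \<beta>d i j * \<mu> t $ j)) {0..t}"
    proof (rule has_integral_sum, simp, rule has_integral_mult_right)
      fix j assume "j \<in> {..<n}"
      then have j: "j < n" by simp
      show "((\<lambda>s. fM s $ j) has_integral \<mu> t $ j) {0..t}"
        using sol_int[OF filt_y j t] j unfolding fM_def by simp
    qed
    have "((\<lambda>s. fX s $ i - (\<Sum>j<n. PP n c \<beta>b i j * fZ s $ j) - (\<Sum>j<n. PP n c \<beta>d i j * fM s $ j)) has_integral
       (x t $ i - x0 $ i - (\<Sum>j<n. PP n c \<beta>b i j * \<zeta> t $ j) - (\<Sum>j<n. PP n c \<beta>d i j * \<mu> t $ j))) {0..t}"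
      by (intro has_integral_diff I1 I2 I3)
    then show ?thesis unfolding integrand[OF i] xi_idx[OF i] by (simp add: algebra_simps)
  qed
  have xic: "continuous_on {0..T} (\<lambda>s. \<xi> s $ i)" if i: "i < n" for T i
  proof -
    have "continuous_on {0..T} (\<lambda>s. x s $ i - (\<Sum>j<n. PP n c \<beta>b i j * \<zeta> s $ j) - (\<Sum>j<n. PP n c \<beta>d i j * \<mu> s $ j))"
      by (intro continuous_intros sol_cont[OF plant i] sol_cont[OF filt_u] sol_cont[OF filt_y]) auto
    then show ?thesis using xi_idx[OF i] by simp
  qed
  have gc: "continuous_on {0..T} (\<lambda>s. (At *\<^sub>v \<xi> s) $ i)" if i: "i < n" for T i
  proof -
    have e: "(At *\<^sub>v \<xi> s) $ i = (if i = 0 then 0 else \<xi> s $ (i - 1)) - c (n - i) * \<xi> s $ (n - 1)" for s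
      unfolding At_def by (rule At_mult[OF psibc(3) i])
    have "i - 1 < n" "n - 1 < n" using i n by auto
    then have "continuous_on {0..T} (\<lambda>s. (if i = 0 then 0 else \<xi> s $ (i - 1)) - c (n - i) * \<xi> s $ (n - 1))"
      by (cases "i = 0") (auto intro!: continuous_intros xic)
    then show ?thesis unfolding e .
  qed
  have dxi: "((\<lambda>s. \<xi> s $ i) has_real_derivative (At *\<^sub>v \<xi> t) $ i) (at t within {0..T})"
    if i: "i < n" and t: "t \<in> {0..T}" for T t i
    by (rule deriv_from_int[OF gc[OF i] hxi[OF i] t]) auto
  have eta_idx: "\<eta> s $ i = (\<Sum>j<n. mat_exp At s $$ (i, j) * x0 $ j)" if i: "i < n" for s i
    unfolding \<eta>_def by (rule mat_vec_idx[OF mat_exp_carrier[OF Atc] x0 i])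
  have deta: "((\<lambda>s. \<eta> s $ i) has_real_derivative (At *\<^sub>v \<eta> t) $ i) (at t within S)"
    if i: "i < n" for t i S
  proof -
    have ec: "\<eta> t \<in> carrier_vec n" unfolding \<eta>_def by (rule mult_mat_vec_carrier[OF mat_exp_carrier[OF Atc] x0])
    have "((\<lambda>s. \<Sum>j<n. mat_exp At s $$ (i, j) * x0 $ j) has_real_derivative
        (\<Sum>j<n. (\<Sum>l<n. At $$ (i, l) * mat_exp At t $$ (l, j)) * x0 $ j)) (at t)"
      by (intro DERIV_sum DERIV_cmult_right mexp_deriv[OF Atc i]) auto
    moreover have "(\<Sum>j<n. (\<Sum>l<n. At $$ (i, l) * mat_exp At t $$ (l, j)) * x0 $ j) = (At *\<^sub>v \<eta> t) $ i"
    proof -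
      have "(At *\<^sub>v \<eta> t) $ i = (\<Sum>l<n. At $$ (i, l) * \<eta> t $ l)" by (rule mat_vec_idx[OF Atc ec i])
      also have "\<dots> = (\<Sum>l<n. \<Sum>j<n. At $$ (i, l) * mat_exp At t $$ (l, j) * x0 $ j)"
        by (rule sum.cong) (auto simp: eta_idx sum_distrib_left mult.assoc)
      also have "\<dots> = (\<Sum>j<n. (\<Sum>l<n. At $$ (i, l) * mat_exp At t $$ (l, j)) * x0 $ j)"
        by (subst sum.swap) (simp add: sum_distrib_right)
      finally show ?thesis by simp
    qed
    ultimately have "((\<lambda>s. \<Sum>j<n. mat_exp At s $$ (i, j) * x0 $ j) has_real_derivative (At *\<^sub>v \<eta> t) $ i) (at t)"
      by simp
    then have "((\<lambda>s. \<eta> s $ i) has_real_derivative (At *\<^sub>v \<eta> t) $ i) (at t)"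
      using eta_idx[OF i] by simp
    then show ?thesis by (rule has_field_derivative_at_within)
  qed
  have xi_eta: "\<xi> s $ i = \<eta> s $ i" if s: "0 \<le> s" and i: "i < n" for s i
  proof -
    define w where "w t l = \<xi> t $ l - \<eta> t $ l" for t l
    have "w s i = 0"
    proof (rule lin_unique[OF s _ _ i, of w At])
      fix k t assume k: "k < n" and t: "t \<in> {0..s}"
      have ec: "\<eta> t \<in> carrier_vec n" unfolding \<eta>_def by (rule mult_mat_vec_carrier[OF mat_exp_carrier[OF Atc] x0])
      have "(\<lambda>s. w s k) = (\<lambda>s. \<xi> s $ k - \<eta> s $ k)" unfolding w_def ..
      moreover have "(At *\<^sub>v \<xi> t) $ k - (At *\<^sub>v \<eta> t) $ k = (\<Sum>l<n. At $$ (k, l) * w t l)"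
        unfolding mat_vec_idx[OF Atc psibc(3) k] mat_vec_idx[OF Atc ec k] w_def
        by (simp add: sum_subtractf algebra_simps)
      ultimately show "((\<lambda>s. w s k) has_real_derivative (\<Sum>l<n. At $$ (k, l) * w t l)) (at t within {0..s})"
        using DERIV_diff[OF dxi[OF k t] deta[OF k]] by simp
    next
      fix k assume k: "k < n"
      have "\<xi> 0 $ k = x0 $ k" using xi_idx[OF k, of 0] x00 z00 m00 by simp
      moreover have "\<eta> 0 $ k = x0 $ k"
      proof -
        have "\<eta> 0 $ k = (\<Sum>j<n. (if k = j then 1 else 0) * x0 $ j)"
          unfolding eta_idx[OF k] by (rule sum.cong) (auto simp: mexp_0[OF Atc k])
        also have "\<dots> = x0 $ k" using k by (rule sum_ind)
        finally show ?thesis .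
      qed
      ultimately show "w 0 k = 0" unfolding w_def by simp
    qed
    then show ?thesis unfolding w_def by simp
  qed
  have key: "x s $ (n - 1) = \<eta> s $ (n - 1) + (\<Sum>j<n. b (n - j) * \<zeta> s $ j) + (\<Sum>j<n. (c (n - j) - a (n - j)) * \<mu> s $ j)"
    if s: "0 \<le> s" for s
  proof -
    have nl: "n - 1 < n" using n by simp
    have "(\<Sum>j<n. PP n c \<beta>b (n - 1) j * \<zeta> s $ j) = (\<Sum>j<n. b (n - j) * \<zeta> s $ j)"
      by (rule sum.cong) (auto simp: PP_last2[of _ n c \<beta>b, simplified] \<beta>b_def)
    moreover have "(\<Sum>j<n. PP n c \<beta>d (n - 1) j * \<mu> s $ j) = (\<Sum>j<n. (c (n - j) - a (n - j)) * \<mu> s $ j)"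
      by (rule sum.cong) (auto simp: PP_last2[of _ n c \<beta>d, simplified] \<beta>d_def)
    ultimately show ?thesis using xi_eta[OF s nl] xi_idx[OF nl, of s] by simp
  qed
  have etac[simp]: "\<eta> s \<in> carrier_vec n" for s
    unfolding \<eta>_def by (rule mult_mat_vec_carrier[OF mat_exp_carrier[OF Atc] x0])
  have AF: "A_f n a b c *\<^sub>v (\<zeta> s @\<^sub>v \<mu> s) =
     (Ac *\<^sub>v \<zeta> s + 0\<^sub>m n n *\<^sub>v \<mu> s) @\<^sub>v (L_b n b *\<^sub>v \<zeta> s + comp_mat n a *\<^sub>v \<mu> s)" for s
    unfolding A_f_def Ac_def by (rule four_block_mat_mult_vec) auto
  have Fi: "(A_f n a b c *\<^sub>v (\<zeta> s @\<^sub>v \<mu> s) + u s \<cdot>\<^sub>v B_f n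
                 + G_f n *\<^sub>v (mat_exp (transpose_mat (comp_mat n c)) s *\<^sub>v x0)) $ i =
     (if i < n then (Ac *\<^sub>v \<zeta> s) $ i else (L_b n b *\<^sub>v \<zeta> s) $ (i - n) + (comp_mat n a *\<^sub>v \<mu> s) $ (i - n))
     + u s * (if i = n - 1 then 1 else 0) + (if i = 2 * n - 1 then \<eta> s $ (n - 1) else 0)"
    if i: "i < 2 * n" for s i
  proof -
    have g: "(G_f n *\<^sub>v \<eta> s) $ i = (if i = 2 * n - 1 then \<eta> s $ (n - 1) else 0)"
      by (rule G_f_mult[OF etac i n])
    have dG: "dim_vec (G_f n *\<^sub>v \<eta> s) = 2 * n" by (simp add: G_f_def)
    have dB: "dim_vec (B_f n) = 2 * n" by (simp add: B_f_def)
    have bf: "B_f n $ i = (if i = n - 1 then 1 else 0)" using i by (simp add: B_f_def)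
    have dA: "dim_vec (A_f n a b c *\<^sub>v (\<zeta> s @\<^sub>v \<mu> s)) = 2 * n"
      using carrier_matD(1)[OF A_f_carrier[of n a b c]] by simp
    have ai: "(A_f n a b c *\<^sub>v (\<zeta> s @\<^sub>v \<mu> s)) $ i =
       (if i < n then (Ac *\<^sub>v \<zeta> s) $ i else (L_b n b *\<^sub>v \<zeta> s) $ (i - n) + (comp_mat n a *\<^sub>v \<mu> s) $ (i - n))"
    proof -
      have "i < dim_vec (Ac *\<^sub>v \<zeta> s + 0\<^sub>m n n *\<^sub>v \<mu> s) + dim_vec (L_b n b *\<^sub>v \<zeta> s + comp_mat n a *\<^sub>v \<mu> s)"
        using i by (simp add: Ac_def L_b_def)
      then show ?thesis unfolding AF using i by (auto simp: Ac_def L_b_def)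
    qed
    have split: "(A_f n a b c *\<^sub>v (\<zeta> s @\<^sub>v \<mu> s) + u s \<cdot>\<^sub>v B_f n + G_f n *\<^sub>v \<eta> s) $ i =
       (A_f n a b c *\<^sub>v (\<zeta> s @\<^sub>v \<mu> s)) $ i + u s * B_f n $ i + (G_f n *\<^sub>v \<eta> s) $ i"
      using i dG dB dA by simp
    show ?thesis unfolding \<eta>_def[symmetric] At_def[symmetric] split ai bf g by simp
  qed
  show ?thesis
  proof
    show "reachable (2 * n) (A_f n a b c) (B_f n)" by (rule reach[OF n A1])
  next
    show "is_solution (2 * n) (\<lambda>t. \<zeta> t @\<^sub>v \<mu> t)
           (\<lambda>s. A_f n a b c *\<^sub>v (\<zeta> s @\<^sub>v \<mu> s) + u s \<cdot>\<^sub>v B_f n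
                 + G_f n *\<^sub>v (mat_exp (transpose_mat (comp_mat n c)) s *\<^sub>v x0))
           (0\<^sub>v (2 * n))"
      unfolding is_solution_def
    proof (intro conjI allI impI)
      fix t
      show "\<zeta> t @\<^sub>v \<mu> t \<in> carrier_vec (2 * n)"
        using append_carrier_vec[OF zc mc] by (simp add: mult_2)
    next
      show "\<zeta> 0 @\<^sub>v \<mu> 0 = 0\<^sub>v (2 * n)"
        by (rule eq_vecI) (auto simp: z00 m00)
    next
      fix t :: real and i assume t: "0 \<le> t" and i: "i < 2 * n"
      have lhs: "(\<zeta> t @\<^sub>v \<mu> t) $ i - 0\<^sub>v (2 * n) $ i = (if i < n then \<zeta> t $ i else \<mu> t $ (i - n))"
        using i by simp
      have main: "((\<lambda>s. (if i < n then (Ac *\<^sub>v \<zeta> s) $ i else (L_b n b *\<^sub>v \<zeta> s) $ (i - n) + (comp_mat n a *\<^sub>v \<mu> s) $ (i - n))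
     + u s * (if i = n - 1 then 1 else 0) + (if i = 2 * n - 1 then \<eta> s $ (n - 1) else 0)) has_integral
        (if i < n then \<zeta> t $ i else \<mu> t $ (i - n))) {0..t}"
      proof (cases "i < n")
        case True
        have ne: "i \<noteq> 2 * n - 1" using True n by simp
        have "((\<lambda>s. (comp_mat n c *\<^sub>v \<zeta> s + u s \<cdot>\<^sub>v B_r n) $ i) has_integral (\<zeta> t $ i - 0\<^sub>v n $ i)) {0..t}"
          by (rule sol_int[OF filt_u True t])
        then show ?thesis using True ne
          by (simp add: Ac_def B_r_def)
      next
        case False
        define i' where "i' = i - n"
        have i': "i' < n" using i False unfolding i'_def by simp
        have I: "((\<lambda>s. (comp_mat n c *\<^sub>v \<mu> s + (C_obs n \<bullet> x s) \<cdot>\<^sub>v B_r n) $ i') has_integral (\<mu> t $ i' - 0\<^sub>v n $ i')) {0..t}"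
          by (rule sol_int[OF filt_y i' t])
        have I': "((\<lambda>s. fM s $ i') has_integral (if i < n then \<zeta> t $ i else \<mu> t $ (i - n))) {0..t}"
          by (rule has_integral_eq_rhs[OF I[unfolded fM_def[symmetric]]]) (use False i' in \<open>simp add: i'_def\<close>)
        show ?thesis
        proof (cases "i' = n - 1")
          case True
          have i2: "i = 2 * n - 1" using True False i unfolding i'_def by simp
          have ne: "i \<noteq> n - 1" using i2 n by simp
          show ?thesis
          proof (rule has_integral_eq[OF _ I'])
            fix s assume "s \<in> {0..t}"
            then have s: "0 \<le> s" by simp
            have "fM s $ i' = - (\<Sum>j<n. c (n - j) * \<mu> s $ j) + x s $ (n - 1)"
              using fM_idx[OF i', of s] comp_mat_mult[OF mc i', of c s] True i' by (simp add: B_r_def)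
            also have "\<dots> = (\<Sum>j<n. b (n - j) * \<zeta> s $ j) - (\<Sum>j<n. a (n - j) * \<mu> s $ j) + \<eta> s $ (n - 1)"
              unfolding key[OF s] by (simp add: left_diff_distrib sum_subtractf)
            also have "\<dots> = (if i < n then (Ac *\<^sub>v \<zeta> s) $ i else (L_b n b *\<^sub>v \<zeta> s) $ (i - n) + (comp_mat n a *\<^sub>v \<mu> s) $ (i - n))
     + u s * (if i = n - 1 then 1 else 0) + (if i = 2 * n - 1 then \<eta> s $ (n - 1) else 0)"
              using False ne i2 L_b_mult[OF zc i', of b s] comp_mat_mult[OF mc i', of a s] True
              unfolding i'_def[symmetric] by simp
            finally show "fM s $ i' = \<dots>" .
          qed
        next
          case ne1: False
          have ne: "i \<noteq> n - 1" "i \<noteq> 2 * n - 1" using ne1 False i unfolding i'_def by auto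
          show ?thesis
          proof (rule has_integral_eq[OF _ I'])
            fix s
            have "fM s $ i' = \<mu> s $ Suc i'"
              using fM_idx[OF i', of s] comp_mat_mult[OF mc i', of c s] ne1 i' by (simp add: B_r_def)
            also have "\<dots> = (if i < n then (Ac *\<^sub>v \<zeta> s) $ i else (L_b n b *\<^sub>v \<zeta> s) $ (i - n) + (comp_mat n a *\<^sub>v \<mu> s) $ (i - n))
     + u s * (if i = n - 1 then 1 else 0) + (if i = 2 * n - 1 then \<eta> s $ (n - 1) else 0)"
              using False ne L_b_mult[OF zc i', of b s] comp_mat_mult[OF mc i', of a s] ne1
              unfolding i'_def[symmetric] by simp
            finally show "fM s $ i' = \<dots>" .
          qed
        qed
      qed
      show "((\<lambda>s. (A_f n a b c *\<^sub>v (\<zeta> s @\<^sub>v \<mu> s) + u s \<cdot>\<^sub>v B_f n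
                 + G_f n *\<^sub>v (mat_exp (transpose_mat (comp_mat n c)) s *\<^sub>v x0)) $ i) has_integral
             ((\<zeta> t @\<^sub>v \<mu> t) $ i - 0\<^sub>v (2 * n) $ i)) {0..t}"
        by (rule has_integral_eq_rhs[OF has_integral_eq[OF _ main]]) (simp_all only: Fi[OF i] lhs)
    qed
  qed
qed

end
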